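(* Let $m\ge3$ and let $M_1,\ldots,M_m$ be mutually disjoint connected open subsets of $\mathbb{S}^2$ such that \[\partial_{\mathrm{top}}M_1=\cdots=\partial_{\mathrm{top}}M_m=\bigcap_{i=1}^m\overline{M_i}.\] Then none of the domains $M_1,\ldots,M_m$ is a John domain.
   Context: $\partial_{\mathrm{top}}E$ denotes topological boundary and $\overline{E}$ closure. $\mathbb{S}^2$ carries its standard metric. An open connected proper subset $D$ of $\mathbb{S}^2$ is a John domain if there is $C\ge1$ such that any $a,b\in D$ can be joined by a rectifiable curve $\gamma\subset D$ with $\min\{s(\gamma(a,x)),s(\gamma(b,x))\}\le C\,\mathrm{dist}(x,\mathbb{S}^2\setminus D)$ for all $x\in\gamma$, where $\gamma(a,x),\gamma(b,x)$ are the subarcs of $\gamma$ from $a$, resp. $b$, to $x$ and $s$ denotes length. *)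

theory Defs
  imports "HOL-Analysis.Analysis"
begin

definition S2 :: "(real^3) set" where
  "S2 = sphere 0 1"

definition sdist :: "real^3 \<Rightarrow> real^3 \<Rightarrow> real" where
  "sdist x y = arccos (x \<bullet> y)"

definition sdist_set :: "real^3 \<Rightarrow> (real^3) set \<Rightarrow> real" where
  "sdist_set x A = Inf (sdist x ` A)"

definition partition_sums :: "(real \<Rightarrow> real^3) \<Rightarrow> real \<Rightarrow> real \<Rightarrow> real set" where
  "partition_sums g s t =
     {(\<Sum>i<n. sdist (g (p i)) (g (p (Suc i)))) | p n.
        p 0 = s \<and> p n = t \<and> (\<forall>i<n. p i \<le> p (Suc i))}"

definition curve_length :: "(real \<Rightarrow> real^3) \<Rightarrow> real \<Rightarrow> real \<Rightarrow> real" where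
  "curve_length g s t = Sup (partition_sums g s t)"

definition rectifiable_curve :: "(real \<Rightarrow> real^3) \<Rightarrow> bool" where
  "rectifiable_curve g \<longleftrightarrow> bdd_above (partition_sums g 0 1)"

definition john_domain :: "(real^3) set \<Rightarrow> bool" where
  "john_domain D \<longleftrightarrow>
     openin (top_of_set S2) D \<and> connected D \<and> D \<subset> S2 \<and>
     (\<exists>C\<ge>1. \<forall>a\<in>D. \<forall>b\<in>D. \<exists>g. path g \<and> rectifiable_curve g \<and>
        g ` {0..1} \<subseteq> D \<and> g 0 = a \<and> g 1 = b \<and>
        (\<forall>t\<in>{0..1}. min (curve_length g 0 t) (curve_length g t 1)
                       \<le> C * sdist_set (g t) (S2 - D)))"

end

theory Submission
  imports Defs
begin


lemma two_sin_ge: fixes u :: real assumes "0 \<le> u" "u \<le> pi/2" shows "u \<le> 2 * sin u"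
proof (cases "u \<le> pi/3")
  case True
  show ?thesis
  proof (cases "u = 0")
    case True then show ?thesis by simp
  next
    case False
    then have "0 < u" using assms by simp
    obtain z where z: "0 < z" "z < u" "sin u - sin 0 = (u - 0) * cos z"
      using MVT2[of 0 u sin cos] \<open>0 < u\<close> by (auto intro: DERIV_sin)
    have "cos (pi/3) \<le> cos z"
      using z True by (intro cos_monotone_0_pi_le) (auto)
    then have "1/2 \<le> cos z" by (simp add: cos_60)
    have "u * (1/2) \<le> u * cos z" by (rule mult_left_mono) (use \<open>1/2 \<le> cos z\<close> \<open>0<u\<close> in auto)
    then show ?thesis using z by simp
  qed
next
  case False
  have "sin (pi/3) \<le> sin u"
    using False assms by (intro sin_monotone_2pi_le) auto
  then have "sqrt 3 / 2 \<le> sin u" by (simp add: sin_60)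
  moreover have "pi/2 \<le> sqrt 3"
  proof -
    have "pi/2 \<le> 1.6" using pi_approx by simp
    then have "(pi/2)^2 \<le> (1.6::real)^2" by (intro power_mono) auto
    moreover have "(1.6::real)^2 \<le> 3" by (simp add: power2_eq_square)
    ultimately have "(pi/2)^2 \<le> 3" by linarith
    then show ?thesis
      by (metis abs_of_nonneg pi_ge_zero real_le_rsqrt divide_nonneg_pos zero_less_numeral)
  qed
  ultimately show ?thesis using assms by linarith
qed

lemma dist_sq_unit:
  fixes x y :: "real^3" assumes "norm x = 1" "norm y = 1"
  shows "(dist x y)^2 = 2 - 2 * (x \<bullet> y)"
proof -
  have "(dist x y)^2 = (x - y) \<bullet> (x - y)" by (simp add: dist_norm power2_norm_eq_inner)
  also have "\<dots> = x \<bullet> x - 2 * (x \<bullet> y) + y \<bullet> y" by (simp add: inner_diff_left inner_diff_right inner_commute)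
  also have "x \<bullet> x = 1" using assms by (metis power2_norm_eq_inner power_one)
  also have "y \<bullet> y = 1" using assms by (metis power2_norm_eq_inner power_one)
  finally show ?thesis by simp
qed

lemma inner_unit_bounds:
  fixes x y :: "real^3" assumes "norm x = 1" "norm y = 1"
  shows "-1 \<le> x \<bullet> y" "x \<bullet> y \<le> 1"
  using Cauchy_Schwarz_ineq2[of x y] assms by auto

lemma sdist_bounds:
  fixes x y :: "real^3" assumes "norm x = 1" "norm y = 1"
  shows "dist x y \<le> sdist x y" "sdist x y \<le> 2 * dist x y" "0 \<le> sdist x y"
proof -
  define c where "c = x \<bullet> y"
  have c1: "-1 \<le> c" "c \<le> 1" using inner_unit_bounds[OF assms] by (auto simp: c_def)
  define th where "th = arccos c"
  have th: "0 \<le> th" "th \<le> pi" "cos th = c" using c1 by (auto simp: th_def arccos_lbound arccos_ubound)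
  have "cos th = 1 - 2 * (sin (th/2))^2" using cos_double_sin[of "th/2"] by simp
  moreover have "(dist x y)^2 = 2 - 2 * c" using dist_sq_unit[OF assms] by (simp add: c_def)
  ultimately have "(dist x y)^2 = (2 * sin (th/2))^2" using th by (simp add: power_mult_distrib)
  moreover have "0 \<le> sin (th/2)" using th by (intro sin_ge_zero) auto
  ultimately have d: "dist x y = 2 * sin (th/2)"
    by (metis power2_eq_iff_nonneg zero_le_dist mult_nonneg_nonneg zero_le_numeral)
  have sd: "sdist x y = th" by (simp add: sdist_def th_def c_def)
  show "dist x y \<le> sdist x y" using d sd sin_x_le_x[of "th/2"] th by simp
  show "sdist x y \<le> 2 * dist x y" using d sd two_sin_ge[of "th/2"] th by simp
  show "0 \<le> sdist x y" using sd th by simp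
qed



lemma ss_le:
  fixes x :: "real^3" assumes "norm x = 1" "A \<subseteq> S2" "A \<noteq> {}"
  shows "sdist_set x A \<le> 2 * infdist x A"
proof (rule ccontr)
  assume "\<not> ?thesis"
  then have "(INF a\<in>A. dist x a) < sdist_set x A / 2" using assms by (simp add: infdist_def)
  then obtain a where a: "a \<in> A" "dist x a < sdist_set x A / 2"
    by (subst (asm) cINF_less_iff) (use assms(3) in \<open>auto intro: bdd_belowI[of _ 0]\<close>)
  have na: "norm a = 1" using a assms by (auto simp: S2_def)
  have "sdist_set x A \<le> sdist x a"
    unfolding sdist_set_def
    by (rule cInf_lower) (use a assms na sdist_bounds(3) in \<open>auto simp: S2_def intro!: bdd_belowI[of _ 0]\<close>)
  also have "\<dots> \<le> 2 * dist x a" using sdist_bounds(2)[OF assms(1) na] .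
  finally show False using a by simp
qed

lemma S2_norm: "x \<in> S2 \<Longrightarrow> norm x = 1" by (simp add: S2_def)

lemma cl_lower0:
  assumes "rectifiable_curve g" "g ` {0..1} \<subseteq> S2" "t \<in> {0..1}"
  shows "sdist (g 0) (g t) \<le> curve_length g 0 t"
proof -
  have mem: "sdist (g 0) (g t) \<in> partition_sums g 0 t"
    unfolding partition_sums_def
    by (rule CollectI, rule exI[of _ "\<lambda>i::nat. if i = 0 then 0 else t"], rule exI[of _ 1])
       (use assms(3) in auto)
  have bdd: "bdd_above (partition_sums g 0 t)"
  proof -
    obtain B where B: "\<And>s. s \<in> partition_sums g 0 1 \<Longrightarrow> s \<le> B"
      using assms(1) unfolding rectifiable_curve_def bdd_above_def by auto
    show ?thesis
    proof (rule bdd_aboveI[of _ B])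
      fix s assume "s \<in> partition_sums g 0 t"
      then obtain p n where s: "s = (\<Sum>i<n. sdist (g (p i)) (g (p (Suc i))))"
        and p: "p 0 = 0" "p n = t" "\<forall>i<n. p i \<le> p (Suc i)"
        unfolding partition_sums_def by blast
      define p' where "p' = (\<lambda>i. if i \<le> n then p i else (1::real))"
      have "(\<Sum>i<Suc n. sdist (g (p' i)) (g (p' (Suc i)))) \<in> partition_sums g 0 1"
        unfolding partition_sums_def
        by (rule CollectI, rule exI[of _ p'], rule exI[of _ "Suc n"])
           (use p assms(3) in \<open>auto simp: p'_def less_Suc_eq\<close>)
      then have le: "(\<Sum>i<Suc n. sdist (g (p' i)) (g (p' (Suc i)))) \<le> B" by (rule B)
      have "(\<Sum>i<Suc n. sdist (g (p' i)) (g (p' (Suc i)))) =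
            (\<Sum>i<n. sdist (g (p' i)) (g (p' (Suc i)))) + sdist (g t) (g 1)"
        using p by (simp add: p'_def)
      also have "(\<Sum>i<n. sdist (g (p' i)) (g (p' (Suc i)))) = s"
        unfolding s by (rule sum.cong) (auto simp: p'_def)
      finally have "s + sdist (g t) (g 1) \<le> B" using le by simp
      moreover have "0 \<le> sdist (g t) (g 1)"
        by (rule sdist_bounds(3); rule S2_norm) (use assms in auto)
      ultimately show "s \<le> B" by simp
    qed
  qed
  show ?thesis unfolding curve_length_def by (rule cSup_upper[OF mem bdd])
qed

lemma cl_lower1:
  assumes "rectifiable_curve g" "g ` {0..1} \<subseteq> S2" "t \<in> {0..1}"
  shows "sdist (g t) (g 1) \<le> curve_length g t 1"
proof -
  have mem: "sdist (g t) (g 1) \<in> partition_sums g t 1"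
    unfolding partition_sums_def
    by (rule CollectI, rule exI[of _ "\<lambda>i::nat. if i = 0 then t else 1"], rule exI[of _ 1])
       (use assms(3) in auto)
  have bdd: "bdd_above (partition_sums g t 1)"
  proof -
    obtain B where B: "\<And>s. s \<in> partition_sums g 0 1 \<Longrightarrow> s \<le> B"
      using assms(1) unfolding rectifiable_curve_def bdd_above_def by auto
    show ?thesis
    proof (rule bdd_aboveI[of _ B])
      fix s assume "s \<in> partition_sums g t 1"
      then obtain p n where s: "s = (\<Sum>i<n. sdist (g (p i)) (g (p (Suc i))))"
        and p: "p 0 = t" "p n = 1" "\<forall>i<n. p i \<le> p (Suc i)"
        unfolding partition_sums_def by blast
      define p' where "p' = (\<lambda>i. if i = 0 then (0::real) else p (i - 1))"
      have "(\<Sum>i<Suc n. sdist (g (p' i)) (g (p' (Suc i)))) \<in> partition_sums g 0 1"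
        unfolding partition_sums_def
      proof (rule CollectI, rule exI[of _ p'], rule exI[of _ "Suc n"], intro conjI allI impI)
        fix i assume "i < Suc n"
        then show "p' i \<le> p' (Suc i)"
          using p assms(3) by (cases i) (auto simp: p'_def)
      qed (use p in \<open>auto simp: p'_def\<close>)
      then have le: "(\<Sum>i<Suc n. sdist (g (p' i)) (g (p' (Suc i)))) \<le> B" by (rule B)
      have "(\<Sum>i<Suc n. sdist (g (p' i)) (g (p' (Suc i)))) =
            sdist (g 0) (g t) + (\<Sum>i<n. sdist (g (p' (Suc i))) (g (p' (Suc (Suc i)))))"
        unfolding sum.lessThan_Suc_shift using p by (simp add: p'_def)
      also have "(\<Sum>i<n. sdist (g (p' (Suc i))) (g (p' (Suc (Suc i))))) = s"
        unfolding s by (rule sum.cong) (auto simp: p'_def)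
      finally have "sdist (g 0) (g t) + s \<le> B" using le by simp
      moreover have "0 \<le> sdist (g 0) (g t)"
        by (rule sdist_bounds(3); rule S2_norm) (use assms in auto)
      ultimately show "s \<le> B" by simp
    qed
  qed
  show ?thesis unfolding curve_length_def by (rule cSup_upper[OF mem bdd])
qed

lemma john_euclid:
  assumes "john_domain D"
  obtains C where "C > 0" "\<And>a b. a \<in> D \<Longrightarrow> b \<in> D \<Longrightarrow> \<exists>g. path g \<and> g ` {0..1} \<subseteq> D \<and> g 0 = a \<and> g 1 = b \<and>
      (\<forall>t\<in>{0..1}. min (dist (g t) a) (dist (g t) b) \<le> C * infdist (g t) (S2 - D))"
proof -
  from assms obtain C where C: "C \<ge> 1" and DS: "D \<subset> S2" and
    P: "\<And>a b. a \<in> D \<Longrightarrow> b \<in> D \<Longrightarrow> \<exists>g. path g \<and> rectifiable_curve g \<and>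
        g ` {0..1} \<subseteq> D \<and> g 0 = a \<and> g 1 = b \<and>
        (\<forall>t\<in>{0..1}. min (curve_length g 0 t) (curve_length g t 1)
                       \<le> C * sdist_set (g t) (S2 - D))"
    unfolding john_domain_def by blast
  have ne: "S2 - D \<noteq> {}" using DS by blast
  show ?thesis
  proof (rule that[of "2 * C"])
    show "2 * C > 0" using C by simp
    fix a b assume ab: "a \<in> D" "b \<in> D"
    obtain g where g: "path g" "rectifiable_curve g" "g ` {0..1} \<subseteq> D" "g 0 = a" "g 1 = b"
      and gt: "\<And>t. t\<in>{0..1} \<Longrightarrow> min (curve_length g 0 t) (curve_length g t 1) \<le> C * sdist_set (g t) (S2 - D)"
      using P[OF ab] by blast
    have gS: "g ` {0..1} \<subseteq> S2" using g(3) DS by blast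
    have "\<forall>t\<in>{0..1}. min (dist (g t) a) (dist (g t) b) \<le> (2 * C) * infdist (g t) (S2 - D)"
    proof
      fix t :: real assume t: "t \<in> {0..1}"
      have n: "norm (g 0) = 1" "norm (g t) = 1" "norm (g 1) = 1"
        using gS t by (auto intro!: S2_norm)
      have "dist (g t) a \<le> curve_length g 0 t"
        using sdist_bounds(1)[OF n(1) n(2)] cl_lower0[OF g(2) gS t] g(4) by (simp add: dist_commute)
      moreover have "dist (g t) b \<le> curve_length g t 1"
        using sdist_bounds(1)[OF n(2) n(3)] cl_lower1[OF g(2) gS t] g(5) by simp
      ultimately have "min (dist (g t) a) (dist (g t) b) \<le> C * sdist_set (g t) (S2 - D)"
        using gt[OF t] by linarith
      also have "\<dots> \<le> C * (2 * infdist (g t) (S2 - D))"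
        using ss_le[OF n(2) _ ne] C by (intro mult_left_mono) auto
      finally show "min (dist (g t) a) (dist (g t) b) \<le> (2 * C) * infdist (g t) (S2 - D)" by simp
    qed
    then show "\<exists>g. path g \<and> g ` {0..1} \<subseteq> D \<and> g 0 = a \<and> g 1 = b \<and>
      (\<forall>t\<in>{0..1}. min (dist (g t) a) (dist (g t) b) \<le> (2 * C) * infdist (g t) (S2 - D))"
      using g by blast
  qed
qed



lemma seg_key:
  fixes P Q :: "real^3" and t :: real
  assumes P: "norm P = 1" and Q: "norm Q = 1" and d: "dist P Q < 1" and t: "0 \<le> t" "t \<le> 1"
  defines "v \<equiv> (1 - t) *\<^sub>R P + t *\<^sub>R Q"
  shows "v \<noteq> 0" "norm ((1 / norm v) *\<^sub>R v) = 1"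
    "dist P ((1 / norm v) *\<^sub>R v) \<le> dist P Q"
    "t < 1 \<Longrightarrow> P \<noteq> Q \<Longrightarrow> dist P ((1 / norm v) *\<^sub>R v) < dist P Q"
proof -
  define c where "c = P \<bullet> Q"
  have PP: "P \<bullet> P = 1" "Q \<bullet> Q = 1" using P Q by (metis power2_norm_eq_inner power_one)+
  have dsq: "(dist P Q)^2 = 2 - 2 * c" using dist_sq_unit[OF P Q] by (simp add: c_def)
  have c1: "c \<le> 1" using inner_unit_bounds[OF P Q] by (simp add: c_def)
  have "(dist P Q)^2 < 1" using d by (simp add: power_less_one_iff abs_less_iff)
  then have c2: "c > 1/2" using dsq by simp
  have vP: "v \<bullet> P = (1 - t) + t * c"
    by (simp add: v_def inner_add_left PP c_def inner_commute[of Q P])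
  have vv: "v \<bullet> v = (1 - t)^2 + t^2 + 2 * t * (1 - t) * c"
    by (simp add: v_def inner_add_left inner_add_right PP c_def inner_commute power2_eq_square algebra_simps)
  have vPpos: "v \<bullet> P > 0"
  proof -
    have "(1 - t) + t * c \<ge> (1 - t) * c + t * c" using t c1 by (intro add_right_mono) (simp add: mult_left_le)
    then show ?thesis using vP c2 by (simp add: algebra_simps)
  qed
  then show v0: "v \<noteq> 0" by auto
  then have nv: "norm v > 0" by simp
  show nw: "norm ((1 / norm v) *\<^sub>R v) = 1" using nv by simp
  have diff: "(v \<bullet> P)^2 - c^2 * (v \<bullet> v) = (1 - t)^2 * (1 - c^2) + 2 * t * (1 - t) * c * (1 - c^2)"
    unfolding vP vv by (simp add: power2_eq_square algebra_simps)
  have c0: "0 \<le> c" using c2 by simp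
  have c1': "0 \<le> 1 - c^2" using c0 c1 by (simp add: power2_eq_square mult_le_one)
  have nonneg: "0 \<le> (1 - t)^2 * (1 - c^2) + 2 * t * (1 - t) * c * (1 - c^2)"
    using t c0 c1' by (intro add_nonneg_nonneg mult_nonneg_nonneg) auto
  have key: "c * norm v \<le> v \<bullet> P"
  proof (rule power2_le_imp_le)
    show "(c * norm v)^2 \<le> (v \<bullet> P)^2"
      using diff nonneg by (simp add: power_mult_distrib power2_norm_eq_inner)
  qed (use vPpos in simp)
  define w where "w = (1 / norm v) *\<^sub>R v"
  have wP: "w \<bullet> P = (v \<bullet> P) / norm v" by (simp add: w_def)
  have cw: "c \<le> w \<bullet> P" using key nv by (simp add: wP pos_le_divide_eq)
  have dw: "(dist P w)^2 = 2 - 2 * (w \<bullet> P)"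
    using dist_sq_unit[OF P nw[folded w_def]] by (simp add: inner_commute)
  show "dist P ((1 / norm v) *\<^sub>R v) \<le> dist P Q"
    unfolding w_def[symmetric] by (rule power2_le_imp_le) (use dw dsq cw in auto)
  assume t1: "t < 1" and PQ: "P \<noteq> Q"
  have "c \<noteq> 1" using dsq PQ by auto
  then have "c < 1" using c1 by simp
  then have "0 < 1 - c^2" using c0 abs_square_less_1[of c] by simp
  then have "0 < (1 - t)^2 * (1 - c^2) + 2 * t * (1 - t) * c * (1 - c^2)"
    using t t1 c0 by (intro add_pos_nonneg mult_pos_pos mult_nonneg_nonneg) auto
  have key2: "c * norm v < v \<bullet> P"
  proof (rule power2_less_imp_less)
    show "(c * norm v)^2 < (v \<bullet> P)^2"
      using diff \<open>0 < (1 - t)^2 * (1 - c^2) + 2 * t * (1 - t) * c * (1 - c^2)\<close>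
      by (simp add: power_mult_distrib power2_norm_eq_inner)
  qed (use vPpos in simp)
  have cw2: "c < w \<bullet> P" using key2 nv by (simp add: wP pos_less_divide_eq)
  show "dist P ((1 / norm v) *\<^sub>R v) < dist P Q"
    unfolding w_def[symmetric] by (rule power2_less_imp_less) (use dw dsq cw2 in auto)
qed

lemma sphere_seg:
  fixes P Q :: "real^3"
  assumes P: "norm P = 1" and Q: "norm Q = 1" and d: "dist P Q < 1"
  obtains w where "path w" "pathstart w = P" "pathfinish w = Q" "path_image w \<subseteq> S2"
    "\<And>t. t \<in> {0..1} \<Longrightarrow> dist P (w t) \<le> dist P Q"
    "\<And>t. t \<in> {0..<1} \<Longrightarrow> P \<noteq> Q \<Longrightarrow> dist P (w t) < dist P Q"
proof -
  define w where "w = (\<lambda>t. (1 / norm ((1 - t) *\<^sub>R P + t *\<^sub>R Q)) *\<^sub>R ((1 - t) *\<^sub>R P + t *\<^sub>R Q))"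
  note k = seg_key[OF P Q d]
  show ?thesis
  proof (rule that[of w])
    show "path w" unfolding path_def w_def
      by (intro continuous_intros) (use k(1) in auto)
    show "pathstart w = P" using P by (simp add: w_def pathstart_def)
    show "pathfinish w = Q" using Q by (simp add: w_def pathfinish_def)
    show "path_image w \<subseteq> S2" using k(2) by (auto simp: path_image_def w_def S2_def)
    show "\<And>t. t \<in> {0..1} \<Longrightarrow> dist P (w t) \<le> dist P Q" using k(3) by (auto simp: w_def)
    show "\<And>t. t \<in> {0..<1} \<Longrightarrow> P \<noteq> Q \<Longrightarrow> dist P (w t) < dist P Q" using k(4) by (auto simp: w_def)
  qed
qed



lemma chain_path:
  fixes p :: "nat \<Rightarrow> real \<Rightarrow> 'a::real_normed_vector" and e :: "nat \<Rightarrow> real"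
  assumes pp: "\<And>k. path (p k)" and pf: "\<And>k. pathfinish (p k) = pathstart (p (Suc k))"
    and pim: "\<And>k. path_image (p k) \<subseteq> cball y (e k)"
    and edec: "\<And>k. e (Suc k) \<le> e k" and elim: "e \<longlonglongrightarrow> 0"
  obtains g where "path g" "g 0 = pathstart (p 0)" "g 1 = y" "g ` {0..<1} \<subseteq> (\<Union>k. path_image (p k))"
proof -
  define P where "P = (\<lambda>s::real. if s < 0 then p 0 0 else p (nat \<lfloor>s\<rfloor>) (s - of_int \<lfloor>s\<rfloor>))"
  have Pk: "P s = p k (s - real k)" if "real k \<le> s" "s \<le> real k + 1" for k s
  proof (cases "s < real k + 1")
    case True
    then have "\<lfloor>s\<rfloor> = int k" using that by (simp add: floor_eq_iff)
    then show ?thesis using that by (simp add: P_def)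
  next
    case False
    then have s: "s = real k + 1" using that by simp
    then have fl: "\<lfloor>s\<rfloor> = int k + 1" by simp
    then have "nat \<lfloor>s\<rfloor> = Suc k" by (simp add: nat_add_distrib)
    then have "P s = p (Suc k) (s - of_int \<lfloor>s\<rfloor>)" using s unfolding P_def by simp
    then have "P s = p (Suc k) 0" using fl s by simp
    also have "\<dots> = p k 1" using pf[of k] by (simp add: pathstart_def pathfinish_def)
    finally show ?thesis using s by simp
  qed
  have contk: "continuous_on {real k..real k + 1} P" for k
  proof -
    have "continuous_on {real k..real k + 1} (\<lambda>s. p k (s - real k))"
      by (rule continuous_on_compose2[OF pp[of k, unfolded path_def]]) (auto intro!: continuous_intros)
    then show ?thesis by (rule continuous_on_eq) (use Pk in auto)
  qed
  have contn: "continuous_on {..real n} P" for n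
  proof (induction n)
    case 0
    have "continuous_on {..0::real} (\<lambda>_. p 0 0)" by simp
    then have "continuous_on {..0::real} P" by (rule continuous_on_eq) (auto simp: P_def)
    then show ?case by simp
  next
    case (Suc n)
    have "{..real (Suc n)} = {..real n} \<union> {real n..real n + 1}" by auto
    then show ?case using Suc contk[of n] by (metis closed_atMost closed_real_atLeastAtMost continuous_on_closed_Un)
  qed
  have contP: "continuous_on UNIV P"
  proof -
    have "UNIV = (\<Union>n. {..<real n})"
      by (auto intro: reals_Archimedean2 simp: ) 
    moreover have "continuous_on (\<Union>n. {..<real n}) P"
    proof (rule continuous_on_open_UN)
      fix n show "continuous_on {..<real n} P" by (rule continuous_on_subset[OF contn[of n]]) auto
    qed auto
    ultimately show ?thesis by simp
  qed
  have Pim: "P s \<in> path_image (p (nat \<lfloor>s\<rfloor>))" if "0 \<le> s" for s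
  proof -
    have f: "of_int \<lfloor>s\<rfloor> \<le> s" "s < of_int \<lfloor>s\<rfloor> + 1" using floor_correct[of s] by auto
    have "0 \<le> s - of_int \<lfloor>s\<rfloor>" "s - of_int \<lfloor>s\<rfloor> \<le> 1" using f by linarith+
    then have "s - of_int \<lfloor>s\<rfloor> \<in> {0..1}" by simp
    then show ?thesis using that by (auto simp: P_def path_image_def)
  qed
  define g where "g = (\<lambda>t::real. if t < 1 then P (t / (1 - t)) else y)"
  have cont1: "continuous_on {..<1} g"
  proof -
    have "continuous_on {..<1} (\<lambda>t. P (t / (1 - t)))"
      by (rule continuous_on_compose2[OF contP]) (auto intro!: continuous_intros)
    then show ?thesis by (rule continuous_on_eq) (auto simp: g_def)
  qed
  have "continuous (at t within {0..1}) g" if t: "t \<in> {0..1}" for t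
  proof (cases "t < 1")
    case True
    then have "isCont g t" using cont1 continuous_on_eq_continuous_at[of "{..<1}" g] by auto
    then show ?thesis by (rule continuous_at_imp_continuous_within)
  next
    case False
    then have t1: "t = 1" using t by simp
    show ?thesis unfolding t1 continuous_within_eps_delta
    proof (intro allI impI)
      fix \<epsilon> :: real assume "\<epsilon> > 0"
      then obtain N where N: "\<And>k. k \<ge> N \<Longrightarrow> \<bar>e k\<bar> < \<epsilon>"
        using elim unfolding LIMSEQ_def dist_real_def by force
      have dec: "e k \<le> e N" if "k \<ge> N" for k
        using that by (induction k rule: dec_induct) (auto intro: order_trans[OF edec])
      show "\<exists>d>0. \<forall>x'\<in>{0..1}. dist x' 1 < d \<longrightarrow> dist (g x') (g 1) < \<epsilon>"
      proof (intro exI[of _ "1 / (real N + 1)"] conjI ballI impI)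
        show "0 < 1 / (real N + 1)" by simp
        fix x :: real assume x: "x \<in> {0..1}" "dist x 1 < 1 / (real N + 1)"
        show "dist (g x) (g 1) < \<epsilon>"
        proof (cases "x < 1")
          case False then have "x = 1" using x by simp
          then show ?thesis using \<open>\<epsilon> > 0\<close> by simp
        next
          case True
          define s where "s = x / (1 - x)"
          have "1 - x < 1 / (real N + 1)" using x True by (simp add: dist_real_def)
          then have "(1 - x) * (real N + 1) < 1" by (simp add: field_simps)
          then have "real N * (1 - x) \<le> x" by (simp add: algebra_simps)
          then have sN: "real N \<le> s" using True by (simp add: s_def field_simps)
          have s0: "0 \<le> s" using x True by (simp add: s_def)
          have kN: "nat \<lfloor>s\<rfloor> \<ge> N" using sN by (simp add: le_nat_floor)
          have "g x = P s" using True by (simp add: g_def s_def)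
          then have "g x \<in> cball y (e (nat \<lfloor>s\<rfloor>))" using Pim[OF s0] pim[of "nat \<lfloor>s\<rfloor>"] by auto
          then have "dist (g x) y \<le> e (nat \<lfloor>s\<rfloor>)" by (simp add: dist_commute)
          also have "\<dots> \<le> e N" using dec[OF kN] .
          also have "\<dots> < \<epsilon>" using N[of N] by simp
          finally show ?thesis by (simp add: g_def)
        qed
      qed
    qed
  qed
  then have "path g" unfolding path_def using continuous_on_eq_continuous_within by blast
  moreover have "g 0 = pathstart (p 0)" by (simp add: g_def P_def pathstart_def)
  moreover have "g 1 = y" by (simp add: g_def)
  moreover have "g ` {0..<1} \<subseteq> (\<Union>k. path_image (p k))"
  proof
    fix z assume "z \<in> g ` {0..<1}"
    then obtain x where x: "x \<in> {0..<1}" "z = g x" by auto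
    then have "z = P (x / (1 - x))" by (simp add: g_def)
    then show "z \<in> (\<Union>k. path_image (p k))" using Pim[of "x / (1 - x)"] x by auto
  qed
  ultimately show ?thesis using that by blast
qed

definition fexit :: "(real \<Rightarrow> 'a::metric_space) \<Rightarrow> real \<Rightarrow> real" where
  "fexit g s = Inf {t\<in>{0..1}. s \<le> dist (g t) (g 0)}"

lemma fexit_props:
  fixes g :: "real \<Rightarrow> 'a::metric_space"
  assumes g: "path g" and s: "0 < s" "s \<le> dist (g 1) (g 0)"
  shows "fexit g s \<in> {0..1}" "dist (g (fexit g s)) (g 0) = s"
    "\<And>t. t \<in> {0..fexit g s} \<Longrightarrow> dist (g t) (g 0) \<le> s"
proof -
  define A where "A = {t\<in>{0..1}. s \<le> dist (g t) (g 0)}"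
  have contd: "continuous_on {0..1} (\<lambda>t. dist (g t) (g 0))"
    using g unfolding path_def by (intro continuous_intros)
  have "closed ({0..1} \<inter> (\<lambda>t. dist (g t) (g 0)) -` {s..})"
    by (rule continuous_closed_preimage[OF contd]) auto
  moreover have "A = {0..1} \<inter> (\<lambda>t. dist (g t) (g 0)) -` {s..}" by (auto simp: A_def)
  ultimately have clA: "closed A" by simp
  have A1: "1 \<in> A" using s by (simp add: A_def)
  have bA: "bdd_below A" by (rule bdd_belowI[of _ 0]) (auto simp: A_def)
  have tA: "fexit g s \<in> A" unfolding fexit_def A_def[symmetric]
    using closed_contains_Inf[OF _ bA clA] A1 by auto
  then show t01: "fexit g s \<in> {0..1}" by (simp add: A_def)
  have ge: "s \<le> dist (g (fexit g s)) (g 0)" using tA by (simp add: A_def)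
  have lt: "dist (g t) (g 0) < s" if "t \<in> {0..<fexit g s}" for t
  proof (rule ccontr)
    assume "\<not> ?thesis"
    then have "t \<in> A" using that t01 by (auto simp: A_def)
    then have "fexit g s \<le> t" unfolding fexit_def A_def[symmetric] by (rule cInf_lower[OF _ bA])
    then show False using that by simp
  qed
  have pos: "0 < fexit g s"
  proof (rule ccontr)
    assume "\<not> ?thesis"
    then have "fexit g s = 0" using t01 by simp
    then show False using ge s by simp
  qed
  define B where "B = {0..1} \<inter> (\<lambda>t. dist (g t) (g 0)) -` {..s}"
  have clB: "closed B" unfolding B_def by (rule continuous_closed_preimage[OF contd]) auto
  have "{0..<fexit g s} \<subseteq> B" using lt t01 by (fastforce simp: B_def)
  then have "closure {0..<fexit g s} \<subseteq> B" using clB by (rule closure_minimal)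
  then have sub: "{0..fexit g s} \<subseteq> B" using pos by simp
  then show "\<And>t. t \<in> {0..fexit g s} \<Longrightarrow> dist (g t) (g 0) \<le> s" by (auto simp: B_def)
  then have "dist (g (fexit g s)) (g 0) \<le> s" using pos by simp
  then show "dist (g (fexit g s)) (g 0) = s" using ge by simp
qed

lemma fexit_mono:
  fixes g :: "real \<Rightarrow> 'a::metric_space"
  assumes "s' \<le> s" "s \<le> dist (g 1) (g 0)"
  shows "fexit g s' \<le> fexit g s"
  unfolding fexit_def
  by (rule cInf_superset_mono) (use assms in \<open>auto intro: bdd_belowI[of _ 0]\<close>)

lemma pigeon:
  fixes f :: "nat \<Rightarrow> 'a::heine_borel"
  assumes I: "infinite I" and f: "\<And>n. n \<in> I \<Longrightarrow> f n \<in> cball y r" and rho: "\<rho> > 0"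
  obtains I' where "I' \<subseteq> I" "infinite I'" "\<And>n n'. n \<in> I' \<Longrightarrow> n' \<in> I' \<Longrightarrow> dist (f n) (f n') < \<rho>"
proof -
  obtain T where T: "T \<subseteq> cball y r" "finite T" "cball y r \<subseteq> (\<Union>x\<in>T. ball x (\<rho>/2))"
    using compactE_image[OF compact_cball, of "cball y r" "\<lambda>x. ball x (\<rho>/2)"] rho by force
  have "I \<subseteq> (\<Union>x\<in>T. {n\<in>I. f n \<in> ball x (\<rho>/2)})" using T(3) f by blast
  then have "infinite (\<Union>x\<in>T. {n\<in>I. f n \<in> ball x (\<rho>/2)})" using I finite_subset by blast
  then obtain x where x: "x \<in> T" "infinite {n\<in>I. f n \<in> ball x (\<rho>/2)}" using T(2) by blast
  show ?thesis
  proof (rule that[OF _ x(2)])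
    fix n n' assume "n \<in> {n\<in>I. f n \<in> ball x (\<rho>/2)}" "n' \<in> {n\<in>I. f n \<in> ball x (\<rho>/2)}"
    then have "dist x (f n) < \<rho>/2" "dist x (f n') < \<rho>/2" by auto
    moreover have "dist (f n) (f n') \<le> dist (f n) x + dist x (f n')" by (rule dist_triangle)
    ultimately show "dist (f n) (f n') < \<rho>" by (simp add: dist_commute)
  qed auto
qed



definition sseg :: "real^3 \<Rightarrow> real^3 \<Rightarrow> real \<Rightarrow> real^3" where
  "sseg P Q = (\<lambda>t. (1 / norm ((1 - t) *\<^sub>R P + t *\<^sub>R Q)) *\<^sub>R ((1 - t) *\<^sub>R P + t *\<^sub>R Q))"

lemma sseg_props:
  fixes P Q :: "real^3"
  assumes P: "norm P = 1" and Q: "norm Q = 1" and d: "dist P Q < 1"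
  shows "path (sseg P Q)" "pathstart (sseg P Q) = P" "pathfinish (sseg P Q) = Q"
    "path_image (sseg P Q) \<subseteq> S2"
    "\<And>x. x \<in> path_image (sseg P Q) \<Longrightarrow> dist P x \<le> dist P Q"
    "\<And>t. t \<in> {0..<1} \<Longrightarrow> P \<noteq> Q \<Longrightarrow> dist P (sseg P Q t) < dist P Q"
proof -
  note k = seg_key[OF P Q d]
  show "path (sseg P Q)" unfolding path_def sseg_def
    by (intro continuous_intros) (use k(1) in auto)
  show "pathstart (sseg P Q) = P" using P by (simp add: sseg_def pathstart_def)
  show "pathfinish (sseg P Q) = Q" using Q by (simp add: sseg_def pathfinish_def)
  show "path_image (sseg P Q) \<subseteq> S2" using k(2) by (auto simp: path_image_def sseg_def S2_def)
  show "\<And>x. x \<in> path_image (sseg P Q) \<Longrightarrow> dist P x \<le> dist P Q" using k(3) by (auto simp: sseg_def path_image_def)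
  show "\<And>t. t \<in> {0..<1} \<Longrightarrow> P \<noteq> Q \<Longrightarrow> dist P (sseg P Q t) < dist P Q" using k(4) by (auto simp: sseg_def)
qed

lemma acc_john:
  fixes D :: "(real^3) set" and y x0 :: "real^3"
  assumes DS: "D \<subseteq> S2" and C: "C \<ge> 1"
   and J: "\<And>a b. a \<in> D \<Longrightarrow> b \<in> D \<Longrightarrow> \<exists>g. path g \<and> g ` {0..1} \<subseteq> D \<and> g 0 = a \<and> g 1 = b \<and>
      (\<forall>t\<in>{0..1}. min (dist (g t) a) (dist (g t) b) \<le> C * infdist (g t) (S2 - D))"
   and y: "y \<in> closure D" "y \<notin> D" and x0: "x0 \<in> D"
  obtains \<gamma> where "path \<gamma>" "\<gamma> 1 = y" "\<gamma> ` {0..<1} \<subseteq> D"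
proof -
  define R0 where "R0 = dist x0 y"
  have R0: "R0 > 0" using x0 y by (auto simp: R0_def)
  define \<sigma> where "\<sigma> = min (R0/4) (1/2)"
  have \<sigma>: "0 < \<sigma>" "\<sigma> \<le> R0/4" "\<sigma> \<le> 1/2" using R0 by (auto simp: \<sigma>_def)
  define ss where "ss = (\<lambda>k::nat. \<sigma> * (1/2)^k)"
  have ss_pos: "0 < ss k" for k using \<sigma> by (simp add: ss_def)
  have ss_le: "ss n \<le> ss k" if "k \<le> n" for k n
    using that \<sigma> by (simp add: ss_def power_decreasing)
  have ss_le0: "ss k \<le> \<sigma>" for k using ss_le[of 0 k] by (simp add: ss_def)
  have ss_Suc: "ss (Suc k) = ss k / 2" for k by (simp add: ss_def)
  have "\<forall>n. \<exists>z\<in>D. dist z y < ss n / 2"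
  proof
    fix n
    have "ss n / 2 > 0" using ss_pos[of n] by simp
    then show "\<exists>z\<in>D. dist z y < ss n / 2" using y(1) unfolding closure_approachable by blast
  qed
  then obtain a where a: "\<And>n. a n \<in> D" "\<And>n. dist (a n) y < ss n / 2" by metis
  have "\<forall>n. \<exists>h. path h \<and> h ` {0..1} \<subseteq> D \<and> h 0 = a n \<and> h 1 = x0 \<and>
      (\<forall>t\<in>{0..1}. min (dist (h t) (a n)) (dist (h t) x0) \<le> C * infdist (h t) (S2 - D))"
    using J a(1) x0 by blast
  then obtain g where g: "\<And>n. path (g n)" "\<And>n. g n ` {0..1} \<subseteq> D" "\<And>n. g n 0 = a n" "\<And>n. g n 1 = x0"
    and gJ: "\<And>n t. t \<in> {0..1} \<Longrightarrow> min (dist (g n t) (a n)) (dist (g n t) x0) \<le> C * infdist (g n t) (S2 - D)"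
    by metis
  define \<tau> where "\<tau> = (\<lambda>n s. fexit (g n) s)"
  define pt where "pt = (\<lambda>n s. g n (\<tau> n s))"
  have adist: "dist (a n) y < ss k / 2" if "k \<le> n" for n k
    using a(2)[of n] ss_le[OF that] by simp
  have far: "ss k \<le> dist (g n 1) (g n 0)" if "k \<le> n" for n k
  proof -
    have "dist x0 y \<le> dist x0 (a n) + dist (a n) y" by (rule dist_triangle)
    then show ?thesis using adist[OF that] ss_le0[of k] \<sigma> g(3,4)[of n] by (simp add: R0_def)
  qed
  note fe = fexit_props[OF g(1) ss_pos far, unfolded g(3)]
  have F1: "\<tau> n (ss k) \<in> {0..1}" if "k \<le> n" for n k using fe(1)[OF that] by (simp add: \<tau>_def)
  have F2: "dist (pt n (ss k)) (a n) = ss k" if "k \<le> n" for n k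
    using fe(2)[OF that] by (simp add: \<tau>_def pt_def)
  have F3: "dist (g n t) (a n) \<le> ss k" if "k \<le> n" "t \<in> {0..\<tau> n (ss k)}" for n k t
    using fe(3)[OF that(1)] that(2) by (simp add: \<tau>_def)
  have F4: "pt n (ss k) \<in> D" if "k \<le> n" for n k using g(2)[of n] F1[OF that] by (auto simp: pt_def)
  have F5: "dist (pt n (ss k)) y \<le> 3/2 * ss k" if "k \<le> n" for n k
  proof -
    have "dist (pt n (ss k)) y \<le> dist (pt n (ss k)) (a n) + dist (a n) y" by (rule dist_triangle)
    then show ?thesis using F2[OF that] adist[OF that] by simp
  qed
  have F6: "ss k \<le> C * infdist (pt n (ss k)) (S2 - D)" if "k \<le> n" for n k
  proof -
    have "dist x0 y \<le> dist x0 (pt n (ss k)) + dist (pt n (ss k)) y" by (rule dist_triangle)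
    then have "ss k \<le> dist (pt n (ss k)) x0"
      using F5[OF that] ss_le0[of k] \<sigma> by (simp add: R0_def dist_commute)
    then have "ss k \<le> min (dist (pt n (ss k)) (a n)) (dist (pt n (ss k)) x0)" using F2[OF that] by simp
    also have "\<dots> \<le> C * infdist (pt n (ss k)) (S2 - D)" unfolding pt_def by (rule gJ[OF F1[OF that]])
    finally show ?thesis .
  qed
  define \<rho> where "\<rho> = (\<lambda>k. ss k / C)"
  have \<rho>pos: "0 < \<rho> k" for k using ss_pos C by (simp add: \<rho>_def)
  have \<rho>le: "\<rho> k \<le> ss k" for k using ss_pos[of k] C by (simp add: \<rho>_def divide_le_eq mult_le_cancel_left1 less_imp_le)
  have \<rho>inf: "\<rho> k \<le> infdist (pt n (ss k)) (S2 - D)" if "k \<le> n" for n k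
    using F6[OF that] C by (simp add: \<rho>_def divide_le_eq mult.commute)
  define Nx where "Nx = (\<lambda>k J. SOME J'. J' \<subseteq> J \<inter> {k..} \<and> infinite J' \<and>
      (\<forall>n\<in>J'. \<forall>n'\<in>J'. dist (pt n (ss k)) (pt n' (ss k)) < \<rho> k))"
  have nx: "Nx k J \<subseteq> J \<inter> {k..} \<and> infinite (Nx k J) \<and>
      (\<forall>n\<in>Nx k J. \<forall>n'\<in>Nx k J. dist (pt n (ss k)) (pt n' (ss k)) < \<rho> k)" if "infinite J" for k J
  proof -
    have "infinite (J \<inter> {k..})"
    proof
      assume "finite (J \<inter> {k..})"
      then have "finite ((J \<inter> {k..}) \<union> {..<k})" by simp
      moreover have "J \<subseteq> (J \<inter> {k..}) \<union> {..<k}" by auto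
      ultimately show False using that finite_subset by blast
    qed
    moreover have "pt n (ss k) \<in> cball y (3/2 * ss k)" if "n \<in> J \<inter> {k..}" for n
      using F5[of k n] that by (simp add: dist_commute)
    ultimately obtain J' where "J' \<subseteq> J \<inter> {k..}" "infinite J'"
      "\<And>n n'. n \<in> J' \<Longrightarrow> n' \<in> J' \<Longrightarrow> dist (pt n (ss k)) (pt n' (ss k)) < \<rho> k"
      using pigeon[of "J \<inter> {k..}" "\<lambda>n. pt n (ss k)" y "3/2 * ss k" "\<rho> k"] \<rho>pos by metis
    then have "\<exists>J'. J' \<subseteq> J \<inter> {k..} \<and> infinite J' \<and>
      (\<forall>n\<in>J'. \<forall>n'\<in>J'. dist (pt n (ss k)) (pt n' (ss k)) < \<rho> k)" by blast
    then show ?thesis unfolding Nx_def by (rule someI_ex)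
  qed
  define I where "I = rec_nat (Nx 0 UNIV) (\<lambda>k J. Nx (Suc k) J)"
  have I0: "I 0 = Nx 0 UNIV" and IS: "I (Suc k) = Nx (Suc k) (I k)" for k by (simp_all add: I_def)
  have Ik: "infinite (I k) \<and> I k \<subseteq> {k..} \<and> (\<forall>n\<in>I k. \<forall>n'\<in>I k. dist (pt n (ss k)) (pt n' (ss k)) < \<rho> k)" for k
  proof (induction k)
    case 0 then show ?case using nx[of UNIV 0] by (simp add: I0)
  next
    case (Suc k) then show ?case using nx[of "I k" "Suc k"] by (simp add: IS)
  qed
  have Isub: "I (Suc k) \<subseteq> I k" for k using nx[of "I k" "Suc k"] Ik[of k] by (simp add: IS)
  define nn where "nn = (\<lambda>k. SOME n. n \<in> I k)"
  have nnI: "nn k \<in> I k" for k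
    unfolding nn_def by (rule someI_ex) (use Ik[of k] in \<open>auto dest: infinite_imp_nonempty\<close>)
  have nnge: "k \<le> nn k" for k using nnI[of k] Ik[of k] by auto
  have nnI': "nn (Suc k) \<in> I k" for k using nnI Isub by blast
  have nnge': "k \<le> nn (Suc k)" for k using nnge[of "Suc k"] by simp
  define P where "P = (\<lambda>k. pt (nn k) (ss k))"
  define Q where "Q = (\<lambda>k. pt (nn (Suc k)) (ss k))"
  have PQ: "dist (P k) (Q k) < \<rho> k" for k using Ik[of k] nnI[of k] nnI'[of k] by (simp add: P_def Q_def)
  have PD: "P k \<in> D" for k using F4[OF nnge[of k]] by (simp add: P_def)
  have QD: "Q k \<in> D" for k using F4[OF nnge'[of k]] by (simp add: Q_def)
  have nP: "norm (P k) = 1" for k using PD DS S2_norm by blast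
  have nQ: "norm (Q k) = 1" for k using QD DS S2_norm by blast
  have PQ1: "dist (P k) (Q k) < 1" for k using PQ[of k] \<rho>le[of k] ss_le0[of k] \<sigma> by simp
  note sp = sseg_props[OF nP nQ PQ1]
  define u where "u = (\<lambda>k. \<tau> (nn (Suc k)) (ss k))"
  define v where "v = (\<lambda>k. \<tau> (nn (Suc k)) (ss (Suc k)))"
  define piece where "piece = (\<lambda>k. sseg (P k) (Q k) +++ subpath (u k) (v k) (g (nn (Suc k))))"
  have u01: "u k \<in> {0..1}" for k using F1[OF nnge'[of k]] by (simp add: u_def)
  have v01: "v k \<in> {0..1}" for k using F1[of "Suc k" "nn (Suc k)"] nnge[of "Suc k"] by (simp add: v_def)
  have vu: "v k \<le> u k" for k
    unfolding v_def u_def \<tau>_def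
    by (rule fexit_mono) (use ss_le[of k "Suc k"] far[OF nnge'[of k]] in auto)
  have jn: "pathfinish (sseg (P k) (Q k)) = pathstart (subpath (u k) (v k) (g (nn (Suc k))))" for k
    using sp(3) by (simp add: Q_def pt_def u_def)
  have ppath: "path (piece k)" for k
    unfolding piece_def using sp(1) jn g(1) u01 v01 by (intro path_join_imp) auto
  have pfin: "pathfinish (piece k) = pathstart (piece (Suc k))" for k
    unfolding piece_def using sp(2) by (simp add: P_def pt_def v_def)
  have pstart: "pathstart (piece 0) = P 0" unfolding piece_def using sp(2) by simp
  have pim: "path_image (piece k) \<subseteq> D \<inter> cball y (3 * ss k)" for k
  proof -
    have "path_image (sseg (P k) (Q k)) \<subseteq> D \<inter> cball y (3 * ss k)"
    proof
      fix x assume x: "x \<in> path_image (sseg (P k) (Q k))"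
      then have dx: "dist (P k) x < \<rho> k" using sp(5)[OF x] PQ[of k] by simp
      have xS: "x \<in> S2" using sp(4) x by blast
      have "x \<in> D"
      proof (rule ccontr)
        assume "x \<notin> D"
        then have "infdist (P k) (S2 - D) \<le> dist (P k) x" using xS by (intro infdist_le) auto
        then show False using dx \<rho>inf[OF nnge[of k]] by (simp add: P_def)
      qed
      moreover have "dist y x \<le> 3 * ss k"
      proof -
        have "dist y x \<le> dist y (P k) + dist (P k) x" by (rule dist_triangle)
        then show ?thesis using F5[OF nnge[of k]] dx \<rho>le[of k] ss_pos[of k] by (simp add: P_def dist_commute)
      qed
      ultimately show "x \<in> D \<inter> cball y (3 * ss k)" by simp
    qed
    moreover have "path_image (subpath (u k) (v k) (g (nn (Suc k)))) \<subseteq> D \<inter> cball y (3 * ss k)"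
    proof
      fix x assume "x \<in> path_image (subpath (u k) (v k) (g (nn (Suc k))))"
      then obtain t where t: "t \<in> {v k..u k}" "x = g (nn (Suc k)) t"
        using vu[of k] by (auto simp: path_image_subpath split: if_splits)
      have t01: "t \<in> {0..1}" using t(1) u01[of k] v01[of k] by auto
      have "x \<in> D" using g(2) t01 t(2) by blast
      moreover have "dist y x \<le> 3 * ss k"
      proof -
        have "dist x (a (nn (Suc k))) \<le> ss k"
          using F3[OF nnge'[of k], of t] t v01[of k] by (auto simp: u_def)
        moreover have "dist y x \<le> dist y (a (nn (Suc k))) + dist (a (nn (Suc k))) x" by (rule dist_triangle)
        ultimately show ?thesis using adist[OF nnge'[of k]] ss_pos[of k] by (simp add: dist_commute)
      qed
      ultimately show "x \<in> D \<inter> cball y (3 * ss k)" by simp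
    qed
    ultimately show ?thesis unfolding piece_def using path_image_join[OF jn] by auto
  qed
  have edec: "3 * ss (Suc k) \<le> 3 * ss k" for k using ss_le[of k "Suc k"] by simp
  have elim: "(\<lambda>k. 3 * ss k) \<longlonglongrightarrow> 0"
    unfolding ss_def by (intro tendsto_mult_right_zero LIMSEQ_power_zero) auto
  obtain \<gamma> where "path \<gamma>" "\<gamma> 0 = pathstart (piece 0)" "\<gamma> 1 = y" "\<gamma> ` {0..<1} \<subseteq> (\<Union>k. path_image (piece k))"
    using chain_path[where p=piece and e="\<lambda>k. 3 * ss k" and y=y] ppath pfin pim edec elim by blast
  moreover have "(\<Union>k. path_image (piece k)) \<subseteq> D" using pim by blast
  ultimately show ?thesis using that by blast
qed



lemma open_meet:
  assumes "openin (top_of_set S2) U" "x \<in> U" "x \<in> closure A" "A \<subseteq> S2"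
  shows "U \<inter> A \<noteq> {}"
proof -
  obtain Op where O: "open Op" "U = S2 \<inter> Op" using assms(1) by (auto simp: openin_open)
  have "Op \<inter> closure A \<noteq> {}" using assms(2,3) O by auto
  then have "Op \<inter> A \<noteq> {}" using open_Int_closure_eq_empty[OF O(1)] by blast
  then show ?thesis using O assms(4) by blast
qed

lemma sep:
  fixes D M2 W :: "(real^3) set"
  assumes oD: "openin (top_of_set S2) D" and W: "W \<subseteq> S2" "connected W" "W \<inter> D \<noteq> {}" "W \<inter> M2 \<noteq> {}"
    and M2: "M2 \<inter> closure D = {}"
  shows "W \<inter> (closure D - D) \<noteq> {}"
proof
  assume K: "W \<inter> (closure D - D) = {}"
  obtain Op where O: "open Op" "D = S2 \<inter> Op" using oD by (auto simp: openin_open)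
  have "Op \<inter> W = {} \<or> (- closure D) \<inter> W = {}"
  proof (rule connectedD[OF W(2) O(1)])
    show "open (- closure D)" by (intro open_Compl closed_closure)
    show "Op \<inter> - closure D \<inter> W = {}" using O W(1) closure_subset by blast
    show "W \<subseteq> Op \<union> - closure D" using K O by blast
  qed
  then show False using W(3,4) O M2 by blast
qed

lemma acc_near:
  fixes U :: "(real^3) set"
  assumes oU: "openin (top_of_set S2) U" and q: "q \<in> U" and w: "w \<in> S2 - U" and d: "dist q w < 1"
  obtains z \<rho> where "z \<in> S2 - U" "dist q z \<le> dist q w" "path \<rho>" "\<rho> 1 = z" "\<rho> ` {0..<1} \<subseteq> U"
    "z \<in> closure U"
proof -
  have US: "U \<subseteq> S2" using oU by (rule openin_imp_subset)
  have "closedin (top_of_set S2) (S2 - U)" using oU by (simp add: closedin_def openin_imp_subset Diff_Diff_Int Int_absorb1 US)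
  then have cl: "closed (S2 - U)" by (rule closedin_closed_trans) (simp add: S2_def)
  obtain z where z: "z \<in> S2 - U" "\<And>x. x \<in> S2 - U \<Longrightarrow> dist q z \<le> dist q x"
    using distance_attains_inf[OF cl, of q] w by blast
  have dz: "dist q z \<le> dist q w" using z w by blast
  have nq: "norm q = 1" "norm z = 1" using q US z(1) S2_norm by blast+
  have qz: "q \<noteq> z" using q z(1) by blast
  note sp = sseg_props[OF nq(1) nq(2)] 
  have d1: "dist q z < 1" using dz d by simp
  have inU: "sseg q z t \<in> U" if "t \<in> {0..<1}" for t
  proof (rule ccontr)
    assume "sseg q z t \<notin> U"
    moreover have "sseg q z t \<in> S2" using sp(4)[OF d1] that by (auto simp: path_image_def)
    ultimately have "dist q z \<le> dist q (sseg q z t)" using z(2) by blast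
    then show False using sp(6)[OF d1 that qz] by simp
  qed
  have p1: "sseg q z 1 = z" using sp(3)[OF d1] by (simp add: pathfinish_def)
  have "sseg q z ` closure {0..<1} \<subseteq> closure U"
  proof (rule image_closure_subset)
    show "continuous_on (closure {0..<1}) (sseg q z)" using sp(1)[OF d1] by (simp add: path_def)
    show "sseg q z ` {0..<1} \<subseteq> closure U" using inU closure_subset by blast
  qed simp
  then have "sseg q z 1 \<in> closure U" by auto
  then have "z \<in> closure U" using p1 by simp
  then show ?thesis using that[OF z(1) dz sp(1)[OF d1] p1] inU by blast
qed

lemma mk_arc:
  fixes U :: "(real^3) set"
  assumes conn: "\<And>a b. a \<in> U \<Longrightarrow> b \<in> U \<Longrightarrow> \<exists>g. path g \<and> path_image g \<subseteq> U \<and> pathstart g = a \<and> pathfinish g = b"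
   and g1: "path \<gamma>1" "\<gamma>1 1 = y1" "\<gamma>1 ` {0..<1} \<subseteq> U"
   and g2: "path \<gamma>2" "\<gamma>2 1 = y2" "\<gamma>2 ` {0..<1} \<subseteq> U" and y: "y1 \<noteq> y2"
  obtains \<alpha> where "arc \<alpha>" "pathstart \<alpha> = y1" "pathfinish \<alpha> = y2" "path_image \<alpha> \<subseteq> U \<union> {y1, y2}"
proof -
  have "\<gamma>1 0 \<in> U" "\<gamma>2 0 \<in> U" using g1(3) g2(3) by auto
  then obtain g where g: "path g" "path_image g \<subseteq> U" "pathstart g = \<gamma>1 0" "pathfinish g = \<gamma>2 0"
    using conn by blast
  define p where "p = reversepath \<gamma>1 +++ (g +++ \<gamma>2)"
  have j1: "pathfinish g = pathstart \<gamma>2" using g(4) by (simp add: pathstart_def)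
  have j2: "pathfinish (reversepath \<gamma>1) = pathstart (g +++ \<gamma>2)" using g(3) by (simp add: pathstart_def joinpaths_def)
  have pp: "path p" unfolding p_def
    using j1 j2 g(1) g1(1) g2(1) by (auto intro!: path_join_imp)
  have ps: "pathstart p = y1" using g1 by (simp add: p_def pathfinish_def)
  have pf: "pathfinish p = y2" unfolding p_def pathfinish_join using g2 by (simp add: pathfinish_def)
  have im1: "path_image \<gamma>1 \<subseteq> U \<union> {y1, y2}"
  proof
    fix x assume "x \<in> path_image \<gamma>1"
    then obtain t where t: "t \<in> {0..1}" "x = \<gamma>1 t" by (auto simp: path_image_def)
    show "x \<in> U \<union> {y1, y2}"
    proof (cases "t = 1")
      case True then show ?thesis using t g1 by auto
    next
      case False then have "t \<in> {0..<1}" using t by auto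
      then show ?thesis using t g1 by blast
    qed
  qed
  have im2: "path_image \<gamma>2 \<subseteq> U \<union> {y1, y2}"
  proof
    fix x assume "x \<in> path_image \<gamma>2"
    then obtain t where t: "t \<in> {0..1}" "x = \<gamma>2 t" by (auto simp: path_image_def)
    show "x \<in> U \<union> {y1, y2}"
    proof (cases "t = 1")
      case True then show ?thesis using t g2 by auto
    next
      case False then have "t \<in> {0..<1}" using t by auto
      then show ?thesis using t g2 by blast
    qed
  qed
  have "path_image p \<subseteq> path_image \<gamma>1 \<union> path_image g \<union> path_image \<gamma>2"
    unfolding p_def
    by (metis Un_assoc path_image_join path_image_reversepath pathfinish_join pathfinish_reversepath
        pathstart_def pathstart_join subset_refl g(3,4) pathfinish_def)
  then have pim: "path_image p \<subseteq> U \<union> {y1, y2}" using im1 im2 g(2) by blast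
  obtain q where "arc q" "path_image q \<subseteq> path_image p" "pathstart q = y1" "pathfinish q = y2"
    using path_contains_arc[OF pp ps pf y] by blast
  then show ?thesis using that pim by blast
qed



lemma punct_hom:
  assumes "p \<in> S2"
  obtains h k where "homeomorphism (S2 - {p}) (UNIV::complex set) h k"
proof -
  have "(sphere (0::real^3) 1 - {p}) homeomorphic {x::real^3. axis 1 1 \<bullet> x = 0}"
    by (rule homeomorphic_punctured_sphere_hyperplane) (use assms in \<open>auto simp: S2_def\<close>)
  also have "\<dots> homeomorphic (UNIV::complex set)"
    by (subst homeomorphic_affine_sets_eq) (auto simp: affine_hyperplane aff_dim_hyperplane)
  finally show ?thesis using that unfolding homeomorphic_def S2_def by blast
qed

lemma arc_mid:
  assumes "arc \<alpha>" "path_image \<alpha> \<subseteq> U \<union> {pathstart \<alpha>, pathfinish \<alpha>}"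
  shows "\<alpha> (1/2) \<in> U" "\<alpha> (1/2) \<in> path_image \<alpha>"
proof -
  have inj: "inj_on \<alpha> {0..1}" using assms(1) by (simp add: arc_def)
  have "\<alpha> (1/2) \<noteq> \<alpha> 0" "\<alpha> (1/2) \<noteq> \<alpha> 1" using inj_onD[OF inj] by fastforce+
  moreover show "\<alpha> (1/2) \<in> path_image \<alpha>" by (auto simp: path_image_def)
  ultimately show "\<alpha> (1/2) \<in> U" using assms(2) by (auto simp: pathstart_def pathfinish_def)
qed

lemma jordan_contra:
  fixes D M2 M3 :: "(real^3) set" and \<alpha> \<beta> :: "real \<Rightarrow> real^3"
  assumes oD: "openin (top_of_set S2) D" and oM2: "openin (top_of_set S2) M2"
    and oM3: "openin (top_of_set S2) M3" and cM3: "connected M3" and p: "p \<in> M3"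
    and dis: "D \<inter> M2 = {}" "D \<inter> M3 = {}" "M2 \<inter> M3 = {}" "M2 \<inter> closure D = {}"
    and K3: "closure D - D \<subseteq> closure M3"
    and \<alpha>: "arc \<alpha>" "pathstart \<alpha> = y1" "pathfinish \<alpha> = y2" "path_image \<alpha> \<subseteq> D \<union> {y1, y2}"
    and \<beta>: "arc \<beta>" "pathstart \<beta> = y2" "pathfinish \<beta> = y1" "path_image \<beta> \<subseteq> M2 \<union> {y1, y2}"
    and y: "y1 \<in> S2" "y2 \<in> S2" "y1 \<notin> M3" "y2 \<notin> M3"
  shows False
proof -
  have DS: "D \<subseteq> S2" "M2 \<subseteq> S2" "M3 \<subseteq> S2" using oD oM2 oM3 by (auto dest: openin_imp_subset)
  define c0 where "c0 = \<alpha> +++ \<beta>"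
  define J where "J = path_image c0"
  have jn: "pathfinish \<alpha> = pathstart \<beta>" using \<alpha> \<beta> by simp
  have J: "J = path_image \<alpha> \<union> path_image \<beta>" unfolding J_def c0_def by (rule path_image_join[OF jn])
  have sc0: "simple_path c0" unfolding c0_def
    by (rule simple_path_join_loop) (use \<alpha> \<beta> dis(1) in auto)
  have lc0: "pathfinish c0 = pathstart c0" using \<alpha> \<beta> by (simp add: c0_def)
  have JS: "J \<subseteq> S2 - {p}" using J \<alpha>(4) \<beta>(4) DS y p dis by blast
  have JM3: "J \<inter> M3 = {}" using J \<alpha>(4) \<beta>(4) y dis by blast
  have pS: "p \<in> S2" using p DS by blast
  obtain h k where hom: "homeomorphism (S2 - {p}) (UNIV::complex set) h k" using punct_hom[OF pS] by blast
  have hk: "\<And>x. x \<in> S2 - {p} \<Longrightarrow> k (h x) = x" and kh: "\<And>z. h (k z) = z"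
    and kim: "k ` UNIV = S2 - {p}" and hc: "continuous_on (S2 - {p}) h" and kc: "continuous_on UNIV k"
    using hom by (auto simp: homeomorphism_def)
  have kS: "k z \<in> S2 - {p}" for z using kim by blast
  define c where "c = h \<circ> c0"
  have sc: "simple_path c" unfolding c_def
  proof (rule simple_path_continuous_image[OF sc0])
    show "continuous_on (path_image c0) h" using hc JS J_def continuous_on_subset by blast
    show "inj_on h (path_image c0)" using JS hk unfolding J_def by (metis inj_on_def subsetD)
  qed
  have lc: "pathfinish c = pathstart c" using lc0 by (simp add: c_def pathfinish_def pathstart_def)
  have pic: "path_image c = h ` J" by (simp add: c_def J_def path_image_compose)
  obtain inner outer where io: "inner \<noteq> {}" "open inner" "connected inner"
                "outer \<noteq> {}" "open outer" "connected outer"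
                "bounded inner" "\<not> bounded outer" "inner \<inter> outer = {}"
                "inner \<union> outer = - path_image c"
                "frontier inner = path_image c"
                "frontier outer = path_image c"
    using Jordan_curve[OF sc lc] by blast
  have W_J: "k ` V \<inter> J = {}" if "V \<inter> path_image c = {}" for V
  proof -
    { fix z assume "z \<in> V" "k z \<in> J"
      then have "h (k z) \<in> path_image c" using pic by blast
      then have False using kh \<open>z \<in> V\<close> that by auto }
    then show ?thesis by blast
  qed
  have Wi_J: "k ` inner \<inter> J = {}" by (rule W_J) (use io(10) in blast)
  have Wo_J: "k ` outer \<inter> J = {}" by (rule W_J) (use io(10) in blast)
  have Wio: "k ` inner \<inter> k ` outer = {}"
  proof -
    { fix z w assume zw: "z \<in> inner" "w \<in> outer" "k z = k w"
      then have "h (k z) = h (k w)" by simp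
      then have "z = w" using kh by simp
      then have False using zw io(9) by blast }
    then show ?thesis by blast
  qed
  have meet: "k ` V \<inter> A \<noteq> {}"
    if V: "open V" "frontier V = path_image c" and A: "openin (top_of_set S2) A" "A \<subseteq> S2 - {p}" "a \<in> A" "a \<in> J"
    for V A a
  proof -
    have "openin (top_of_set (S2 - {p})) A" using A(1,2) by (rule openin_subset_trans) auto
    then have "openin (top_of_set UNIV) (h ` A)" by (rule homeomorphism_imp_open_map[OF hom])
    then have oA: "open (h ` A)" by simp
    have "h a \<in> closure V" using V(2) pic A(4) closure_Un_frontier by blast
    then have "h ` A \<inter> V \<noteq> {}" using open_Int_closure_eq_empty[OF oA, of V] A(3) by blast
    then obtain x where x: "x \<in> A" "h x \<in> V" by blast
    then have kx: "k (h x) \<in> k ` V" by blast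
    have "k (h x) = x" using hk x(1) A(2) by blast
    then have "x \<in> k ` V \<inter> A" using kx x(1) by simp
    then show ?thesis by blast
  qed
  have a1: "\<alpha> (1/2) \<in> D" "\<alpha> (1/2) \<in> J" using arc_mid[OF \<alpha>(1)] \<alpha> J by auto
  have b1: "\<beta> (1/2) \<in> M2" "\<beta> (1/2) \<in> J" using arc_mid[OF \<beta>(1)] \<beta> J by auto
  have DSp: "D \<subseteq> S2 - {p}" "M2 \<subseteq> S2 - {p}" using DS p dis by auto
  have K: "k ` V \<inter> (closure D - D) \<noteq> {}" if V: "open V" "frontier V = path_image c" "connected V" for V
  proof (rule sep[OF oD])
    show "k ` V \<subseteq> S2" using kS by blast
    show "connected (k ` V)" by (rule connected_continuous_image[OF continuous_on_subset[OF kc] V(3)]) simp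
    show "k ` V \<inter> D \<noteq> {}" using meet[OF V(1,2) oD DSp(1) a1] .
    show "k ` V \<inter> M2 \<noteq> {}" using meet[OF V(1,2) oM2 DSp(2) b1] .
  qed (use dis in auto)
  define Wi where "Wi = k ` inner"
  define U2 where "U2 = S2 - (J \<union> Wi)"
  have Wi_eq: "Wi = (S2 - {p}) \<inter> h -` inner"
  proof
    show "Wi \<subseteq> (S2 - {p}) \<inter> h -` inner" using kS kh by (auto simp: Wi_def)
    show "(S2 - {p}) \<inter> h -` inner \<subseteq> Wi" unfolding Wi_def using hk by (metis IntE image_eqI subsetI vimageE)
  qed
  have oS2p: "openin (top_of_set S2) (S2 - {p})" by (intro openin_delete openin_subtopology_self)
  have oWi: "openin (top_of_set S2) Wi"
    unfolding Wi_eq by (rule openin_trans[OF continuous_openin_preimage_gen[OF hc io(2)] oS2p])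
  have clo: "closed (J \<union> Wi)"
  proof -
    have "closure inner = inner \<union> path_image c" using closure_Un_frontier[of inner] io(11) by simp
    then have "k ` closure inner = Wi \<union> k ` h ` J" by (simp add: Wi_def pic image_Un)
    also have "k ` h ` J = J" using JS hk by (force simp: image_image)
    finally have eq: "k ` closure inner = J \<union> Wi" by auto
    have "compact (k ` closure inner)"
      by (rule compact_continuous_image[OF continuous_on_subset[OF kc]]) (use io(7) compact_closure in auto)
    then show ?thesis using eq compact_imp_closed by metis
  qed
  have oU2: "openin (top_of_set S2) U2"
  proof -
    have "open (- (J \<union> Wi))" using clo by (rule open_Compl)
    moreover have "U2 = S2 \<inter> - (J \<union> Wi)" by (auto simp: U2_def)
    ultimately show ?thesis unfolding openin_open by blast
  qed
  have WoU2: "k ` outer \<subseteq> U2" using kS Wo_J Wio by (auto simp: U2_def Wi_def)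
  have M3sub: "M3 \<subseteq> Wi \<union> U2" using DS JM3 by (auto simp: U2_def)
  have disj: "Wi \<inter> U2 = {}" by (auto simp: U2_def)
  obtain x1 where x1: "x1 \<in> Wi" "x1 \<in> closure D - D" using K[OF io(2) io(11) io(3)] by (auto simp: Wi_def)
  obtain x2 where x2: "x2 \<in> k ` outer" "x2 \<in> closure D - D" using K[OF io(5) io(12) io(6)] by auto
  have m1: "Wi \<inter> M3 \<noteq> {}" using open_meet[OF oWi x1(1) _ DS(3)] x1(2) K3 by blast
  have m2: "U2 \<inter> M3 \<noteq> {}" using open_meet[OF oU2 _ _ DS(3), of x2] x2 WoU2 K3 by blast
  obtain O1 where O1: "open O1" "Wi = S2 \<inter> O1" using oWi by (auto simp: openin_open)
  obtain O2 where O2: "open O2" "U2 = S2 \<inter> O2" using oU2 by (auto simp: openin_open)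
  have "O1 \<inter> M3 = {} \<or> O2 \<inter> M3 = {}"
  proof (rule connectedD[OF cM3 O1(1) O2(1)])
    show "O1 \<inter> O2 \<inter> M3 = {}" using disj O1 O2 DS(3) by blast
    show "M3 \<subseteq> O1 \<union> O2" using M3sub O1 O2 by blast
  qed
  then show False using m1 m2 O1 O2 by blast
qed



lemma S2_closed: "closed S2" by (simp add: S2_def)

lemma fr_eq:
  assumes "openin (top_of_set S2) A"
  shows "(top_of_set S2) frontier_of A = closure A - A"
proof -
  have AS: "A \<subseteq> S2" using assms by (rule openin_imp_subset)
  have "closure A \<subseteq> S2" using AS S2_closed by (rule closure_minimal)
  then have "(top_of_set S2) closure_of A = closure A"
    using AS by (auto simp: closure_of_subtopology Int_absorb1)
  then show ?thesis using interior_of_openin[OF assms] by (simp add: frontier_of_def)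
qed

lemma conn_punct:
  assumes "w \<in> S2" shows "connected (S2 - {w})"
proof -
  obtain h k where hom: "homeomorphism (S2 - {w}) (UNIV::complex set) h k" using punct_hom[OF assms] by blast
  then have "k ` UNIV = S2 - {w}" "continuous_on UNIV k" by (auto simp: homeomorphism_def)
  then show ?thesis by (metis connected_UNIV connected_continuous_image)
qed

lemma pc_open:
  assumes "openin (top_of_set S2) U" "connected U" "a \<in> U" "b \<in> U"
  shows "\<exists>g. path g \<and> path_image g \<subseteq> U \<and> pathstart g = a \<and> pathfinish g = b"
proof -
  have "locally path_connected S2" unfolding S2_def by (rule locally_path_connected_sphere)
  then have lp: "locally path_connected U" using assms(1) by (rule locally_open_subset)
  have "path_component_set U a = U"
    using path_component_eq_connected_component_set[OF lp] connected_component_eq_self[OF assms(2,3)] by simp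
  then have "path_component U a b" using assms(4) by blast
  then show ?thesis by (simp add: path_component_def)
qed

lemma core:
  fixes D M2 M3 :: "(real^3) set"
  assumes oD: "openin (top_of_set S2) D" and oM2: "openin (top_of_set S2) M2"
    and oM3: "openin (top_of_set S2) M3" and cM2: "connected M2" and cM3: "connected M3"
    and ne: "D \<noteq> {}" "M2 \<noteq> {}" "M3 \<noteq> {}"
    and dis: "D \<inter> M2 = {}" "D \<inter> M3 = {}" "M2 \<inter> M3 = {}"
    and f2: "(top_of_set S2) frontier_of M2 = (top_of_set S2) frontier_of D"
    and f3: "(top_of_set S2) frontier_of M3 = (top_of_set S2) frontier_of D"
    and john: "john_domain D"
  shows False
proof -
  have DS: "D \<subseteq> S2" "M2 \<subseteq> S2" "M3 \<subseteq> S2" using oD oM2 oM3 by (auto dest: openin_imp_subset)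
  define K where "K = closure D - D"
  have K2: "K = closure M2 - M2" using f2 fr_eq[OF oM2] fr_eq[OF oD] by (simp add: K_def)
  have K3: "K = closure M3 - M3" using f3 fr_eq[OF oM3] fr_eq[OF oD] by (simp add: K_def)
  have KS: "K \<subseteq> S2" using closure_minimal[OF DS(1) S2_closed] by (auto simp: K_def)
  have M2cD: "M2 \<inter> closure D = {}"
  proof (rule ccontr)
    assume "M2 \<inter> closure D \<noteq> {}"
    then obtain x where "x \<in> M2" "x \<in> closure D" by blast
    then have "M2 \<inter> D \<noteq> {}" using open_meet[OF oM2 _ _ DS(1)] by blast
    then show False using dis by blast
  qed
  obtain C0 where C0: "C0 > 0" and J0: "\<And>a b. a \<in> D \<Longrightarrow> b \<in> D \<Longrightarrow> \<exists>g. path g \<and> g ` {0..1} \<subseteq> D \<and> g 0 = a \<and> g 1 = b \<and>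
      (\<forall>t\<in>{0..1}. min (dist (g t) a) (dist (g t) b) \<le> C0 * infdist (g t) (S2 - D))"
    using john_euclid[OF john] by blast
  define C where "C = max C0 1"
  have C: "C \<ge> 1" by (simp add: C_def)
  have J: "\<exists>g. path g \<and> g ` {0..1} \<subseteq> D \<and> g 0 = a \<and> g 1 = b \<and>
      (\<forall>t\<in>{0..1}. min (dist (g t) a) (dist (g t) b) \<le> C * infdist (g t) (S2 - D))"
    if ab: "a \<in> D" "b \<in> D" for a b
  proof -
    obtain g where g: "path g" "g ` {0..1} \<subseteq> D" "g 0 = a" "g 1 = b"
      "\<forall>t\<in>{0..1}. min (dist (g t) a) (dist (g t) b) \<le> C0 * infdist (g t) (S2 - D)"
      using J0[OF ab] by blast
    have "\<forall>t\<in>{0..1}. min (dist (g t) a) (dist (g t) b) \<le> C * infdist (g t) (S2 - D)"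
    proof
      fix t :: real assume "t \<in> {0..1}"
      moreover have "C0 * infdist (g t) (S2 - D) \<le> C * infdist (g t) (S2 - D)"
        by (rule mult_right_mono) (auto simp: C_def infdist_nonneg)
      ultimately show "min (dist (g t) a) (dist (g t) b) \<le> C * infdist (g t) (S2 - D)"
        using g(5) by fastforce
    qed
    then show ?thesis using g by blast
  qed
  obtain x0 where x0: "x0 \<in> D" using ne by blast
  have accD: "\<exists>\<gamma>. path \<gamma> \<and> \<gamma> 1 = y \<and> \<gamma> ` {0..<1} \<subseteq> D" if "y \<in> K" for y
  proof -
    have "y \<in> closure D" "y \<notin> D" using that by (auto simp: K_def)
    then obtain \<gamma> where "path \<gamma>" "\<gamma> 1 = y" "\<gamma> ` {0..<1} \<subseteq> D"
      using acc_john[OF DS(1) C J _ _ x0] by metis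
    then show ?thesis by blast
  qed
  have two: "\<exists>w1\<in>K. \<exists>w2\<in>K. w1 \<noteq> w2"
  proof (rule ccontr)
    assume nt: "\<not> (\<exists>w1\<in>K. \<exists>w2\<in>K. w1 \<noteq> w2)"
    obtain w where w: "w \<in> S2" "K \<subseteq> {w}" "w \<notin> D" "w \<notin> M2"
    proof (cases "K = {}")
      case True
      obtain p where "p \<in> M3" using ne by blast
      then show ?thesis using that[of p] True DS dis by blast
    next
      case False
      then obtain w where "w \<in> K" by blast
      then show ?thesis using that[of w] nt KS K2 by (auto simp: K_def)
    qed
    have "(S2 - {w}) \<inter> (closure D - D) \<noteq> {}"
    proof (rule sep[OF oD])
      show "S2 - {w} \<subseteq> S2" by blast
      show "connected (S2 - {w})" by (rule conn_punct[OF w(1)])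
      show "(S2 - {w}) \<inter> D \<noteq> {}" using ne DS w by blast
      show "(S2 - {w}) \<inter> M2 \<noteq> {}" using ne DS w by blast
    qed (rule M2cD)
    then show False using w(2) by (auto simp: K_def)
  qed
  then obtain w1 w2 where w: "w1 \<in> K" "w2 \<in> K" "w1 \<noteq> w2" by blast
  define \<epsilon> where "\<epsilon> = min (dist w1 w2 / 4) (1/2)"
  have \<epsilon>: "\<epsilon> > 0" "\<epsilon> \<le> dist w1 w2 / 4" "\<epsilon> < 1" using w by (auto simp: \<epsilon>_def)
  have near: "\<exists>z \<rho>. z \<in> K \<and> dist z w' < 2 * \<epsilon> \<and> path \<rho> \<and> \<rho> 1 = z \<and> \<rho> ` {0..<1} \<subseteq> M2" if w': "w' \<in> K" for w'
  proof -
    have "w' \<in> closure M2" using w' K2 by blast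
    then obtain q where q: "q \<in> M2" "dist q w' < \<epsilon>" using \<epsilon>(1) by (auto simp: closure_approachable)
    have w'S: "w' \<in> S2 - M2" using w' KS K2 by blast
    obtain z \<rho> where z: "z \<in> S2 - M2" "dist q z \<le> dist q w'" "path \<rho>" "\<rho> 1 = z" "\<rho> ` {0..<1} \<subseteq> M2" "z \<in> closure M2"
      using acc_near[OF oM2 q(1) w'S] q(2) \<epsilon>(3) by (metis less_trans)
    have "z \<in> K" using z(1,6) K2 by blast
    moreover have "dist z w' < 2 * \<epsilon>"
    proof -
      have "dist z w' \<le> dist z q + dist q w'" by (rule dist_triangle)
      then show ?thesis using z(2) q(2) by (simp add: dist_commute)
    qed
    ultimately show ?thesis using z by blast
  qed
  obtain z1 \<rho>1 where z1: "z1 \<in> K" "dist z1 w1 < 2 * \<epsilon>" "path \<rho>1" "\<rho>1 1 = z1" "\<rho>1 ` {0..<1} \<subseteq> M2"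
    using near[OF w(1)] by blast
  obtain z2 \<rho>2 where z2: "z2 \<in> K" "dist z2 w2 < 2 * \<epsilon>" "path \<rho>2" "\<rho>2 1 = z2" "\<rho>2 ` {0..<1} \<subseteq> M2"
    using near[OF w(2)] by blast
  have z12: "z1 \<noteq> z2"
  proof
    assume "z1 = z2"
    then have "dist w1 w2 \<le> dist w1 z1 + dist z1 w2" by (simp add: dist_triangle)
    then show False using z1(2) z2(2) \<epsilon>(2) \<open>z1 = z2\<close> by (simp add: dist_commute)
  qed
  obtain \<gamma>1 where g1: "path \<gamma>1" "\<gamma>1 1 = z1" "\<gamma>1 ` {0..<1} \<subseteq> D" using accD[OF z1(1)] by blast
  obtain \<gamma>2 where g2: "path \<gamma>2" "\<gamma>2 1 = z2" "\<gamma>2 ` {0..<1} \<subseteq> D" using accD[OF z2(1)] by blast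
  have connD: "\<exists>g. path g \<and> path_image g \<subseteq> D \<and> pathstart g = a \<and> pathfinish g = b" if "a \<in> D" "b \<in> D" for a b
    using J[OF that] by (auto simp: path_image_def pathstart_def pathfinish_def)
  obtain \<alpha> where \<alpha>: "arc \<alpha>" "pathstart \<alpha> = z1" "pathfinish \<alpha> = z2" "path_image \<alpha> \<subseteq> D \<union> {z1, z2}"
    using mk_arc[OF connD g1 g2 z12] by blast
  have connM2: "\<exists>g. path g \<and> path_image g \<subseteq> M2 \<and> pathstart g = a \<and> pathfinish g = b" if "a \<in> M2" "b \<in> M2" for a b
    using pc_open[OF oM2 cM2 that] .
  obtain \<beta> where \<beta>: "arc \<beta>" "pathstart \<beta> = z2" "pathfinish \<beta> = z1" "path_image \<beta> \<subseteq> M2 \<union> {z2, z1}"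
    using mk_arc[OF connM2 z2(3-5) z1(3-5)] z12 by metis
  obtain p where p: "p \<in> M3" using ne by blast
  show False
  proof (rule jordan_contra[OF oD oM2 oM3 cM3 p dis M2cD _ \<alpha>])
    show "closure D - D \<subseteq> closure M3" using K3 by (auto simp: K_def)
    show "arc \<beta>" "pathstart \<beta> = z2" "pathfinish \<beta> = z1" using \<beta> by auto
    show "path_image \<beta> \<subseteq> M2 \<union> {z1, z2}" using \<beta>(4) by auto
    show "z1 \<in> S2" "z2 \<in> S2" using z1(1) z2(1) KS by auto
    show "z1 \<notin> M3" "z2 \<notin> M3" using z1(1) z2(1) K3 by auto
  qed
qed


theorem proposition8p3:
  fixes m :: nat and M :: "nat \<Rightarrow> (real^3) set"
  assumes "m \<ge> 3"
    and "\<And>i. i < m \<Longrightarrow> openin (top_of_set S2) (M i)"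
    and "\<And>i. i < m \<Longrightarrow> connected (M i)"
    and "\<And>i. i < m \<Longrightarrow> M i \<noteq> {}"
    and "\<And>i j. i < m \<Longrightarrow> j < m \<Longrightarrow> i \<noteq> j \<Longrightarrow> M i \<inter> M j = {}"
    and "\<And>i. i < m \<Longrightarrow>
           (top_of_set S2) frontier_of (M i) = (\<Inter>j<m. (top_of_set S2) closure_of (M j))"
  shows "\<forall>i<m. \<not> john_domain (M i)"
proof (intro allI impI notI)
  fix i assume i: "i < m" and jd: "john_domain (M i)"
  define j where "j = (if i = 0 then 1 else (0::nat))"
  define k where "k = (if i = 0 \<or> i = 1 then 2 else (1::nat))"
  have jk: "j < m" "k < m" "i \<noteq> j" "i \<noteq> k" "j \<noteq> k" using i assms(1) by (auto simp: j_def k_def)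
  have fr: "\<And>l. l < m \<Longrightarrow> (top_of_set S2) frontier_of (M l) = (top_of_set S2) frontier_of (M i)"
    using assms(6) i by metis
  show False
  proof (rule core[of "M i" "M j" "M k"])
    show "openin (top_of_set S2) (M i)" "openin (top_of_set S2) (M j)" "openin (top_of_set S2) (M k)"
      using assms(2) i jk by auto
    show "connected (M j)" "connected (M k)" using assms(3) jk by auto
    show "M i \<noteq> {}" "M j \<noteq> {}" "M k \<noteq> {}" using assms(4) i jk by auto
    show "M i \<inter> M j = {}" "M i \<inter> M k = {}" "M j \<inter> M k = {}" using assms(5) i jk by auto
    show "(top_of_set S2) frontier_of (M j) = (top_of_set S2) frontier_of (M i)"
      "(top_of_set S2) frontier_of (M k) = (top_of_set S2) frontier_of (M i)" using fr jk by auto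
    show "john_domain (M i)" by (rule jd)
  qed
qed

end
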